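(* Let $\omega>\gamma^2/4$. There exists $\eta>0$ (small) such that for $\alpha=0,1$, $\|Q_{\omega,\gamma}^{-1}e^{\eta|x|}\partial_x^\alpha\mathcal{Y}_\pm\|_{L^\infty(\mathbb{R}\setminus\{0\})}<\infty$.
   Context: Fix $\gamma<0$, $p>5$, $\omega>\gamma^2/4$, and $Q_{\omega,\gamma}(x)=\big[\tfrac{(p+1)\omega}{2}\operatorname{sech}^2\big(\tfrac{(p-1)\sqrt\omega}{2}|x|+\tanh^{-1}(\tfrac{\gamma}{2\sqrt\omega})\big)\big]^{1/(p-1)}$ (positive, decaying like $e^{-\sqrt\omega|x|}$). Let $\mathcal D_{\mathrm{even}}=\{f\in H^1(\mathbb{R})\cap H^2(\mathbb{R}\setminus\{0\})\text{ even}: f'(0+)-f'(0-)=-\gamma f(0)\}$, and on real functions in $\mathcal D_{\mathrm{even}}$ let $L^-f=-f''+\omega f-Q_{\omega,\gamma}^{p-1}f$, $L^+f=-f''+\omega f-pQ_{\omega,\gamma}^{p-1}f$. For $f=f_1+if_2$ set $\mathcal{L}f=-L^-f_2+iL^+f_1$. $\mathcal{Y}_+=\mathcal Y_1+i\mathcal Y_2$ ($\mathcal Y_j\in\mathcal D_{\mathrm{even}}$ real) is the eigenfunction of $\mathcal L$ for its simple positive eigenvalue $e_\omega>0$ on even functions, i.e. $L^+\mathcal{Y}_1=e_\omega\mathcal{Y}_2$, $L^-\mathcal{Y}_2=-e_\omega\mathcal{Y}_1$; $\mathcal Y_-=\overline{\mathcal Y_+}$. The derivative $\partial_x\mathcal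 Y_\pm$ is taken on $\mathbb{R}\setminus\{0\}$. *)

theory Defs
  imports "HOL-Analysis.Analysis"
begin

definition Qwg :: "real \<Rightarrow> real \<Rightarrow> real \<Rightarrow> real \<Rightarrow> real" where
  "Qwg p \<omega> \<gamma> x =
     ((p + 1) * \<omega> / 2 *
        (1 / cosh ((p - 1) * sqrt \<omega> / 2 * \<bar>x\<bar> + artanh (\<gamma> / (2 * sqrt \<omega>)))) ^ 2)
     powr (1 / (p - 1))"

text \<open>Even domain D_even (continuous representative; classical derivatives on R minus 0,
  L2-integrability of f, f', f'' expresses membership in H1(R) and H2(R minus 0);
  the jump condition uses the one-sided limits of f' at 0).\<close>
definition D_even :: "real \<Rightarrow> (real \<Rightarrow> real) \<Rightarrow> bool" where
  "D_even \<gamma> f \<longleftrightarrow>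
     continuous_on UNIV f \<and> (\<forall>x. f (- x) = f x) \<and>
     (\<forall>x. x \<noteq> 0 \<longrightarrow> f differentiable (at x) \<and> deriv f differentiable (at x)) \<and>
     integrable lborel (\<lambda>x. (f x)\<^sup>2) \<and>
     set_integrable lborel (UNIV - {0}) (\<lambda>x. (deriv f x)\<^sup>2) \<and>
     set_integrable lborel (UNIV - {0}) (\<lambda>x. (deriv (deriv f) x)\<^sup>2) \<and>
     (\<exists>a b. (deriv f \<longlongrightarrow> a) (at_right 0) \<and> (deriv f \<longlongrightarrow> b) (at_left 0) \<and>
            a - b = - \<gamma> * f 0)"

definition Lminus :: "real \<Rightarrow> real \<Rightarrow> real \<Rightarrow> (real \<Rightarrow> real) \<Rightarrow> real \<Rightarrow> real" where
  "Lminus p \<omega> \<gamma> f x = - deriv (deriv f) x + \<omega> * f x - (Qwg p \<omega> \<gamma> x) powr (p - 1) * f x"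

definition Lplus :: "real \<Rightarrow> real \<Rightarrow> real \<Rightarrow> (real \<Rightarrow> real) \<Rightarrow> real \<Rightarrow> real" where
  "Lplus p \<omega> \<gamma> f x = - deriv (deriv f) x + \<omega> * f x - p * (Qwg p \<omega> \<gamma> x) powr (p - 1) * f x"

text \<open>(f1 + i f2) is an even eigenfunction of the linearized operator with eigenvalue lam:
  Lplus f1 = lam f2 and Lminus f2 = - lam f1 (on R minus 0).\<close>
definition even_eigpair :: "real \<Rightarrow> real \<Rightarrow> real \<Rightarrow> real \<Rightarrow> (real \<Rightarrow> real) \<Rightarrow> (real \<Rightarrow> real) \<Rightarrow> bool" where
  "even_eigpair p \<omega> \<gamma> lam f1 f2 \<longleftrightarrow>
     D_even \<gamma> f1 \<and> D_even \<gamma> f2 \<and> (\<exists>x. f1 x \<noteq> 0 \<or> f2 x \<noteq> 0) \<and>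
     (\<forall>x. x \<noteq> 0 \<longrightarrow> Lplus p \<omega> \<gamma> f1 x = lam * f2 x \<and> Lminus p \<omega> \<gamma> f2 x = - lam * f1 x)"

end

theory Submission
  imports Defs "HOL-Real_Asymp.Real_Asymp"
begin

lemma cs2: "((u1::real) * v1 + u2 * v2)^2 \<le> (u1^2+u2^2) * (v1^2+v2^2)"
proof -
  have "0 \<le> (u1 * v2 - u2 * v1)^2" by simp
  thus ?thesis by (simp add: power2_eq_square algebra_simps)
qed

lemma absbound: assumes "(t::real)^2 \<le> c^2" "0 \<le> c" shows "\<bar>t\<bar> \<le> c"
  using assms by (metis abs_le_square_iff abs_of_nonneg)

lemma decay:
  fixes Y1 Y2 Y1' Y2' Y1'' Y2'' V :: "real \<Rightarrow> real" and kr ki om e p s \<epsilon> R :: real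
  assumes kr: "kr > 0" and kk1: "kr^2 - ki^2 = om" and kk2: "2*kr*ki = e" and p: "p \<ge> 1"
  and d1: "\<And>x. x \<ge> R \<Longrightarrow> (Y1 has_real_derivative Y1' x) (at x)"
  and d2: "\<And>x. x \<ge> R \<Longrightarrow> (Y2 has_real_derivative Y2' x) (at x)"
  and d3: "\<And>x. x \<ge> R \<Longrightarrow> (Y1' has_real_derivative Y1'' x) (at x)"
  and d4: "\<And>x. x \<ge> R \<Longrightarrow> (Y2' has_real_derivative Y2'' x) (at x)"
  and ode1: "\<And>x. x \<ge> R \<Longrightarrow> Y1'' x = om*Y1 x - p*V x*Y1 x - e*Y2 x"
  and ode2: "\<And>x. x \<ge> R \<Longrightarrow> Y2'' x = om*Y2 x - V x*Y2 x + e*Y1 x"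
  and V: "\<And>x. x \<ge> R \<Longrightarrow> 0 \<le> V x \<and> p * V x \<le> \<epsilon> * kr"
  and eps: "0 \<le> \<epsilon>" "2*\<epsilon> \<le> kr - s" "0 \<le> s"
  and int: "set_integrable lborel {R..} (\<lambda>x. Y1 x^2 + Y2 x^2 + Y1' x^2 + Y2' x^2)"
  shows "\<exists>C. \<forall>x\<ge>R. Y1 x^2 + Y2 x^2 \<le> C * exp(-2* s*x) \<and> Y1' x^2 + Y2' x^2 \<le> C*exp(-2* s*x)"
proof -
  define ar where "ar x = Y1' x + kr*Y1 x - ki*Y2 x" for x
  define ai where "ai x = Y2' x + kr*Y2 x + ki*Y1 x" for x
  define br where "br x = Y1' x - kr*Y1 x + ki*Y2 x" for x
  define bi where "bi x = Y2' x - kr*Y2 x - ki*Y1 x" for x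
  define Fr where "Fr x = p*V x*Y1 x" for x
  define Fi where "Fi x = V x*Y2 x" for x
  define \<alpha> where "\<alpha> x = ar x^2 + ai x^2" for x
  define \<beta> where "\<beta> x = br x^2 + bi x^2" for x
  have om: "om = kr^2 - ki^2" and e: "e = 2*kr*ki" using kk1 kk2 by auto
  have d\<alpha>: "(\<alpha> has_real_derivative 2*kr*\<alpha> x - 2*(ar x * Fr x + ai x * Fi x)) (at x)" if x: "x \<ge> R" for x
  proof -
    have "(\<alpha> has_real_derivative 2*ar x*(Y1'' x + kr*Y1' x - ki*Y2' x) + 2*ai x*(Y2'' x + kr*Y2' x + ki*Y1' x)) (at x)"
      unfolding \<alpha>_def[abs_def] ar_def[abs_def] ai_def[abs_def]
      by (auto intro!: derivative_eq_intros d1 d2 d3 d4 x simp: algebra_simps)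
    moreover have "2*ar x*(Y1'' x + kr*Y1' x - ki*Y2' x) + 2*ai x*(Y2'' x + kr*Y2' x + ki*Y1' x)
       = 2*kr*\<alpha> x - 2*(ar x * Fr x + ai x * Fi x)"
      unfolding \<alpha>_def ar_def ai_def Fr_def Fi_def ode1[OF x] ode2[OF x] om e
      by (simp add: power2_eq_square algebra_simps)
    ultimately show ?thesis by simp
  qed
  have d\<beta>: "(\<beta> has_real_derivative -2*kr*\<beta> x - 2*(br x * Fr x + bi x * Fi x)) (at x)" if x: "x \<ge> R" for x
  proof -
    have "(\<beta> has_real_derivative 2*br x*(Y1'' x - kr*Y1' x + ki*Y2' x) + 2*bi x*(Y2'' x - kr*Y2' x - ki*Y1' x)) (at x)"
      unfolding \<beta>_def[abs_def] br_def[abs_def] bi_def[abs_def]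
      by (auto intro!: derivative_eq_intros d1 d2 d3 d4 x simp: algebra_simps)
    moreover have "2*br x*(Y1'' x - kr*Y1' x + ki*Y2' x) + 2*bi x*(Y2'' x - kr*Y2' x - ki*Y1' x)
       = -2*kr*\<beta> x - 2*(br x * Fr x + bi x * Fi x)"
      unfolding \<beta>_def br_def bi_def Fr_def Fi_def ode1[OF x] ode2[OF x] om e
      by (simp add: power2_eq_square algebra_simps)
    ultimately show ?thesis by simp
  qed
  have a0: "\<alpha> x \<ge> 0" "\<beta> x \<ge> 0" for x unfolding \<alpha>_def \<beta>_def by auto
  have Yab: "2*kr^2*(Y1 x^2 + Y2 x^2) \<le> \<alpha> x + \<beta> x" for x
  proof -
    have "4*kr^2*(Y1 x^2 + Y2 x^2) \<le> 4*(kr^2+ki^2)*(Y1 x^2 + Y2 x^2)"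
      by (intro mult_right_mono) auto
    also have "\<dots> = (ar x - br x)^2 + (ai x - bi x)^2"
      unfolding ar_def br_def ai_def bi_def by (simp add: power2_eq_square algebra_simps)
    also have "\<dots> \<le> 2*(\<alpha> x + \<beta> x)"
      unfolding \<alpha>_def \<beta>_def using sum_squares_ge_zero[of "ar x + br x" "ai x + bi x"]
      by (simp add: power2_eq_square algebra_simps)
    finally show ?thesis by simp
  qed
  have Y'ab: "4*(Y1' x^2 + Y2' x^2) \<le> 2*(\<alpha> x + \<beta> x)" for x
  proof -
    have "(ar x + br x)^2 + (ai x + bi x)^2 = 4*(Y1' x^2 + Y2' x^2)"
      unfolding ar_def br_def ai_def bi_def by (simp add: power2_eq_square algebra_simps)
    moreover have "(ar x + br x)^2 + (ai x + bi x)^2 \<le> 2*(\<alpha> x + \<beta> x)"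
      unfolding \<alpha>_def \<beta>_def using sum_squares_ge_zero[of "ar x - br x" "ai x - bi x"]
      by (simp add: power2_eq_square algebra_simps)
    ultimately show ?thesis by linarith
  qed
  have F2: "Fr x^2 + Fi x^2 \<le> \<epsilon>^2 * (\<alpha> x + \<beta> x)" if x: "x \<ge> R" for x
  proof -
    have Vx: "0 \<le> V x" "p*V x \<le> \<epsilon>*kr" using V[OF x] by auto
    have "Fr x^2 + Fi x^2 \<le> (p*V x)^2 * (Y1 x^2 + Y2 x^2)"
    proof -
      have "V x^2 \<le> (p*V x)^2" using p Vx by (intro power_mono) (auto intro: order_trans[of _ "1*V x"] mult_right_mono)
      hence "V x^2 * Y2 x^2 \<le> (p*V x)^2 * Y2 x^2" by (intro mult_right_mono) auto
      thus ?thesis unfolding Fr_def Fi_def by (simp add: power_mult_distrib algebra_simps)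
    qed
    also have "\<dots> \<le> (\<epsilon>*kr)^2 * (Y1 x^2 + Y2 x^2)"
      using Vx p by (intro mult_right_mono power_mono) auto
    also have "\<dots> = \<epsilon>^2/2 * (2*kr^2*(Y1 x^2 + Y2 x^2))" by (simp add: power_mult_distrib)
    also have "\<dots> \<le> \<epsilon>^2/2 * (\<alpha> x + \<beta> x)" using Yab by (intro mult_left_mono) auto
    also have "\<dots> \<le> \<epsilon>^2 * (\<alpha> x + \<beta> x)" using a0[of x] by (intro mult_right_mono) auto
    finally show ?thesis .
  qed
  have aF: "\<bar>ar x * Fr x + ai x * Fi x\<bar> \<le> \<epsilon> * (\<alpha> x + \<beta> x)" if x: "x \<ge> R" for x
  proof (rule absbound)
    have "(ar x * Fr x + ai x * Fi x)^2 \<le> \<alpha> x * (Fr x^2 + Fi x^2)" unfolding \<alpha>_def by (rule cs2)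
    also have "\<dots> \<le> (\<alpha> x + \<beta> x) * (\<epsilon>^2 * (\<alpha> x + \<beta> x))"
      using F2[OF x] a0[of x] by (intro mult_mono) auto
    finally show "(ar x * Fr x + ai x * Fi x)^2 \<le> (\<epsilon> * (\<alpha> x + \<beta> x))^2"
      by (simp add: power2_eq_square algebra_simps)
    show "0 \<le> \<epsilon> * (\<alpha> x + \<beta> x)" using eps a0[of x] by auto
  qed
  have bF: "\<bar>br x * Fr x + bi x * Fi x\<bar> \<le> \<epsilon> * (\<alpha> x + \<beta> x)" if x: "x \<ge> R" for x
  proof (rule absbound)
    have "(br x * Fr x + bi x * Fi x)^2 \<le> \<beta> x * (Fr x^2 + Fi x^2)" unfolding \<beta>_def by (rule cs2)
    also have "\<dots> \<le> (\<alpha> x + \<beta> x) * (\<epsilon>^2 * (\<alpha> x + \<beta> x))"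
      using F2[OF x] a0[of x] by (intro mult_mono) auto
    finally show "(br x * Fr x + bi x * Fi x)^2 \<le> (\<epsilon> * (\<alpha> x + \<beta> x))^2"
      by (simp add: power2_eq_square algebra_simps)
    show "0 \<le> \<epsilon> * (\<alpha> x + \<beta> x)" using eps a0[of x] by auto
  qed
  have ab: "\<alpha> x \<le> \<beta> x" if x: "x \<ge> R" for x
  proof (rule ccontr)
    assume "\<not> \<alpha> x \<le> \<beta> x"
    define d0 where "d0 = \<alpha> x - \<beta> x"
    have d0: "d0 > 0" using \<open>\<not> \<alpha> x \<le> \<beta> x\<close> unfolding d0_def by simp
    have grow: "d0 \<le> \<alpha> y" if y: "y \<ge> x" for y
    proof -
      have "(\<lambda>t. \<alpha> t - \<beta> t) x \<le> (\<lambda>t. \<alpha> t - \<beta> t) y"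
      proof (rule deriv_nonneg_imp_mono[OF _ _ y])
        fix t assume t: "t \<in> {x..y}"
        hence tR: "t \<ge> R" using x by auto
        show "((\<lambda>t. \<alpha> t - \<beta> t) has_real_derivative
           (2*kr*\<alpha> t - 2*(ar t * Fr t + ai t * Fi t)) - (-2*kr*\<beta> t - 2*(br t * Fr t + bi t * Fi t))) (at t)"
          by (intro derivative_intros d\<alpha> d\<beta> tR)
        show "0 \<le> (2*kr*\<alpha> t - 2*(ar t * Fr t + ai t * Fi t)) - (-2*kr*\<beta> t - 2*(br t * Fr t + bi t * Fi t))"
        proof -
          have "4*\<epsilon>*(\<alpha> t + \<beta> t) \<le> 2*kr*(\<alpha> t + \<beta> t)"
            using eps a0[of t] by (intro mult_right_mono) auto
          thus ?thesis using aF[OF tR] bF[OF tR] by (simp add: abs_le_iff algebra_simps)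
        qed
      qed
      thus ?thesis using a0[of y] unfolding d0_def by simp
    qed
    define G where "G y = Y1 y^2 + Y2 y^2 + Y1' y^2 + Y2' y^2" for y
    define K where "K = 3*(1 + kr^2 + ki^2)"
    have \<alpha>G: "\<alpha> y \<le> K * G y" for y
    proof -
      have "ar y^2 \<le> 3*(Y1' y^2 + kr^2*Y1 y^2 + ki^2*Y2 y^2)"
        unfolding ar_def using sum_squares_ge_zero[of "Y1' y - kr*Y1 y" "Y1' y + ki*Y2 y"]
          sum_squares_ge_zero[of "kr*Y1 y + ki*Y2 y" 0]
        by (simp add: power2_eq_square algebra_simps)
      moreover have "ai y^2 \<le> 3*(Y2' y^2 + kr^2*Y2 y^2 + ki^2*Y1 y^2)"
        unfolding ai_def using sum_squares_ge_zero[of "Y2' y - kr*Y2 y" "Y2' y - ki*Y1 y"]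
          sum_squares_ge_zero[of "kr*Y2 y - ki*Y1 y" 0]
        by (simp add: power2_eq_square algebra_simps)
      moreover have "3*(Y1' y^2 + kr^2*Y1 y^2 + ki^2*Y2 y^2) + 3*(Y2' y^2 + kr^2*Y2 y^2 + ki^2*Y1 y^2) \<le> K * G y"
        unfolding K_def G_def using mult_right_mono[of "kr^2" "1 + kr^2 + ki^2" "Y1 y^2 + Y2 y^2"]
          mult_right_mono[of "ki^2" "1 + kr^2 + ki^2" "Y1 y^2 + Y2 y^2"]
          mult_right_mono[of 1 "1 + kr^2 + ki^2" "Y1' y^2 + Y2' y^2"]
        by (simp add: algebra_simps)
      ultimately show ?thesis unfolding \<alpha>_def by linarith
    qed
    have "integrable lborel (\<lambda>y. K * (indicator {R..} y *\<^sub>R G y))"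
      using int unfolding set_integrable_def G_def by auto
    hence "integrable lborel (\<lambda>y. indicator {x..} y * d0 :: real)"
    proof (rule Bochner_Integration.integrable_bound)
      show "(\<lambda>y. indicator {x..} y * d0 :: real) \<in> borel_measurable lborel" by simp
      show "AE y in lborel. norm (indicator {x..} y * d0 :: real) \<le> norm (K * (indicator {R..} y *\<^sub>R G y))"
      proof (rule AE_I2)
        fix y
        have K0: "K \<ge> 0" unfolding K_def by simp
        have G0: "G y \<ge> 0" unfolding G_def by simp
        show "norm (indicator {x..} y * d0 :: real) \<le> norm (K * (indicator {R..} y *\<^sub>R G y))"
        proof (cases "y \<ge> x")
          case True
          hence "d0 \<le> K * G y" using grow[OF True] \<alpha>G[of y] by linarith
          thus ?thesis using True x d0 K0 G0 by (simp add: indicator_def)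
        qed (use K0 G0 in \<open>simp add: indicator_def\<close>)
      qed
    qed
    hence "integrable lborel (\<lambda>y. (indicator {x..} y * d0) / d0 :: real)"
      by (rule integrable_divide)
    hence "integrable lborel (indicator {x..} :: real \<Rightarrow> real)" using d0 by simp
    hence fin: "emeasure lborel {x..} < \<infinity>" by (simp add: integrable_indicator_iff)
    then obtain m where m: "emeasure lborel {x..} = ennreal m" "m \<ge> 0"
      by (metis ennreal_cases infinity_ennreal_def less_irrefl top.extremum_strict)
    have "ennreal (m+1) = emeasure lborel {x..x+(m+1)}" using m by simp
    also have "\<dots> \<le> emeasure lborel {x..}" by (intro emeasure_mono) auto
    finally have "ennreal (m+1) \<le> ennreal m" using m by simp
    thus False using m by (simp add: ennreal_le_iff)
  qed
  define C0 where "C0 = \<beta> R * exp (2* s*R)"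
  have \<beta>dec: "\<beta> x * exp (2* s*x) \<le> C0" if x: "x \<ge> R" for x
  proof -
    have "(\<lambda>t. - (\<beta> t * exp (2* s*t))) R \<le> (\<lambda>t. - (\<beta> t * exp (2* s*t))) x"
    proof (rule deriv_nonneg_imp_mono[OF _ _ x])
      fix t assume t: "t \<in> {R..x}"
      hence tR: "t \<ge> R" by auto
      show "((\<lambda>t. - (\<beta> t * exp (2* s*t))) has_real_derivative
          - ((-2*kr*\<beta> t - 2*(br t * Fr t + bi t * Fi t)) * exp (2* s*t) + \<beta> t * (exp (2* s*t) * (2* s)))) (at t)"
        by (auto intro!: derivative_eq_intros d\<beta> tR)
      have bF2: "\<bar>br t * Fr t + bi t * Fi t\<bar> \<le> (kr - s) * \<beta> t"
      proof (rule absbound)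
        have "(br t * Fr t + bi t * Fi t)^2 \<le> \<beta> t * (Fr t^2 + Fi t^2)" unfolding \<beta>_def by (rule cs2)
        also have "\<dots> \<le> \<beta> t * (\<epsilon>^2 * (2*\<beta> t))"
          using F2[OF tR] a0[of t] ab[OF tR] eps
          by (intro mult_left_mono order_trans[OF F2[OF tR]] mult_left_mono) auto
        also have "\<dots> = 2*(\<epsilon>*\<beta> t)^2" by (simp add: power2_eq_square algebra_simps)
        also have "\<dots> \<le> (2*(\<epsilon>*\<beta> t))^2" by (simp add: power_mult_distrib)
        also have "\<dots> \<le> ((kr - s) * \<beta> t)^2"
          using eps a0[of t] mult_right_mono[of "2*\<epsilon>" "kr - s" "\<beta> t"] by (intro power_mono) (auto simp: mult.assoc)
        finally show "(br t * Fr t + bi t * Fi t)^2 \<le> ((kr - s) * \<beta> t)^2" .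
        show "0 \<le> (kr - s) * \<beta> t" using eps a0[of t] by auto
      qed
      have "(-2*kr*\<beta> t - 2*(br t * Fr t + bi t * Fi t)) + \<beta> t * (2* s) \<le> 0"
        using bF2 by (simp add: abs_le_iff algebra_simps)
      hence "((-2*kr*\<beta> t - 2*(br t * Fr t + bi t * Fi t)) + \<beta> t * (2* s)) * exp (2* s*t) \<le> 0"
        by (simp add: mult_nonpos_nonneg)
      thus "0 \<le> - ((-2*kr*\<beta> t - 2*(br t * Fr t + bi t * Fi t)) * exp (2* s*t) + \<beta> t * (exp (2* s*t) * (2* s)))"
        by (simp add: algebra_simps)
    qed
    thus ?thesis unfolding C0_def by simp
  qed
  show ?thesis
  proof (intro exI[of _ "C0/kr^2 + C0"] allI impI conjI)
    fix x assume x: "x \<ge> R"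
    have ex: "exp (2* s*x) > 0" by simp
    have b: "\<beta> x \<le> C0 * exp (-2* s*x)"
      using \<beta>dec[OF x] ex by (simp add: exp_minus field_simps mult_exp_exp)
    have C00: "C0 \<ge> 0" unfolding C0_def using a0 by simp
    have "2*kr^2*(Y1 x^2 + Y2 x^2) \<le> 2*\<beta> x" using Yab[of x] ab[OF x] by linarith
    hence "Y1 x^2 + Y2 x^2 \<le> \<beta> x / kr^2" using kr by (simp add: field_simps)
    also have "\<dots> \<le> C0 * exp (-2* s*x) / kr^2" using b kr by (simp add: divide_right_mono)
    also have "\<dots> \<le> (C0/kr^2 + C0) * exp(-2* s*x)" using C00 by (simp add: field_simps)
    finally show "Y1 x^2 + Y2 x^2 \<le> (C0/kr^2 + C0) * exp(-2* s*x)" .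
    have "Y1' x^2 + Y2' x^2 \<le> \<beta> x" using Y'ab[of x] ab[OF x] by argo
    also have "\<dots> \<le> C0 * exp (-2* s*x)" by (rule b)
    also have "\<dots> \<le> (C0/kr^2 + C0) * exp(-2* s*x)" using C00 kr by (intro mult_right_mono) auto
    finally show "Y1' x^2 + Y2' x^2 \<le> (C0/kr^2 + C0) * exp(-2* s*x)" .
  qed
qed

lemma cosh_le_exp_abs: "cosh (y::real) \<le> exp \<bar>y\<bar>"
proof -
  have "exp (-\<bar>y\<bar>) \<le> exp \<bar>y\<bar>" by simp
  thus ?thesis unfolding cosh_def by (cases "y \<ge> 0") auto
qed

lemma cosh_real_eq: "cosh (y::real) = (exp y + exp (-y)) / 2" by (simp add: cosh_def)

lemma sech_lim: "(b::real) > 0 \<Longrightarrow> ((\<lambda>x. A * (1 / cosh (b * x + a0))^2) \<longlongrightarrow> 0) at_top"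
  unfolding cosh_real_eq by real_asymp

lemma Q_facts:
  fixes p \<omega> \<gamma> :: real
  assumes p: "p > 1" and w: "\<omega> > 0"
  defines "A \<equiv> (p + 1) * \<omega> / 2" and "b \<equiv> (p - 1) * sqrt \<omega> / 2" and "a0 \<equiv> artanh (\<gamma> / (2 * sqrt \<omega>))"
  shows "\<And>x. Qwg p \<omega> \<gamma> x > 0"
    and "\<And>x. Qwg p \<omega> \<gamma> x powr (p - 1) = A * (1 / cosh (b * \<bar>x\<bar> + a0))^2"
    and "\<exists>c>0. \<forall>x. Qwg p \<omega> \<gamma> x \<ge> c * exp (- sqrt \<omega> * \<bar>x\<bar>)"
    and "((\<lambda>x. Qwg p \<omega> \<gamma> x powr (p - 1)) \<longlongrightarrow> 0) at_top"
proof -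
  have A: "A > 0" unfolding A_def using p w by simp
  have b: "b > 0" unfolding b_def using p w by simp
  have Qd: "Qwg p \<omega> \<gamma> x = (A * (1 / cosh (b * \<bar>x\<bar> + a0))^2) powr (1/(p-1))" for x
    unfolding Qwg_def A_def b_def a0_def by simp
  have pos: "A * (1 / cosh (b * \<bar>x\<bar> + a0))^2 > 0" for x using A by simp
  show "Qwg p \<omega> \<gamma> x > 0" for x unfolding Qd using pos[of x] A by simp
  show V: "Qwg p \<omega> \<gamma> x powr (p - 1) = A * (1 / cosh (b * \<bar>x\<bar> + a0))^2" for x
    unfolding Qd powr_powr using p pos[of x] by simp
  show "\<exists>c>0. \<forall>x. Qwg p \<omega> \<gamma> x \<ge> c * exp (- sqrt \<omega> * \<bar>x\<bar>)"
  proof (intro exI[of _ "(A * exp (-2*\<bar>a0\<bar>)) powr (1/(p-1))"] conjI allI)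
    show "(A * exp (-2*\<bar>a0\<bar>)) powr (1/(p-1)) > 0" using A by simp
    fix x
    have "0 \<le> b*\<bar>x\<bar>" using b by simp
    hence "\<bar>b * \<bar>x\<bar> + a0\<bar> \<le> b*\<bar>x\<bar> + \<bar>a0\<bar>" by (auto simp: abs_le_iff)
    hence "cosh (b * \<bar>x\<bar> + a0) \<le> exp (b*\<bar>x\<bar> + \<bar>a0\<bar>)"
      using cosh_le_exp_abs[of "b * \<bar>x\<bar> + a0"] by (meson exp_le_cancel_iff order_trans)
    hence "1 / exp (b*\<bar>x\<bar> + \<bar>a0\<bar>) \<le> 1 / cosh (b * \<bar>x\<bar> + a0)"
      by (intro divide_left_mono) auto
    hence "(1 / exp (b*\<bar>x\<bar> + \<bar>a0\<bar>))^2 \<le> (1 / cosh (b * \<bar>x\<bar> + a0))^2"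
      by (intro power_mono) auto
    moreover have "(1 / exp (b*\<bar>x\<bar> + \<bar>a0\<bar>))^2 = exp (-2*\<bar>a0\<bar>) * exp (-2*b*\<bar>x\<bar>)"
      by (simp add: power2_eq_square exp_minus field_simps flip: exp_add)
    ultimately have le: "A * (exp (-2*\<bar>a0\<bar>) * exp (-2*b*\<bar>x\<bar>)) \<le> A * (1 / cosh (b * \<bar>x\<bar> + a0))^2"
      using A by simp
    have "(A * exp (-2*\<bar>a0\<bar>)) powr (1/(p-1)) * exp (- sqrt \<omega> * \<bar>x\<bar>)
        = (A * exp (-2*\<bar>a0\<bar>)) powr (1/(p-1)) * exp (-2*b*\<bar>x\<bar>) powr (1/(p-1))"
      unfolding exp_powr_real using p unfolding b_def by (simp add: field_simps)
    also have "\<dots> = (A * (exp (-2*\<bar>a0\<bar>) * exp (-2*b*\<bar>x\<bar>))) powr (1/(p-1))"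
      using A by (simp add: powr_mult mult.assoc)
    also have "\<dots> \<le> Qwg p \<omega> \<gamma> x" unfolding Qd using le p A
      by (intro powr_mono2) auto
    finally show "(A * exp (-2*\<bar>a0\<bar>)) powr (1/(p-1)) * exp (- sqrt \<omega> * \<bar>x\<bar>) \<le> Qwg p \<omega> \<gamma> x" .
  qed
  have "((\<lambda>x. A * (1 / cosh (b * \<bar>x\<bar> + a0))^2) \<longlongrightarrow> 0) at_top"
  proof -
    have lim: "((\<lambda>x. A * (1 / cosh (b * x + a0))^2) \<longlongrightarrow> 0) at_top"
      using b by (rule sech_lim)
    have ev: "eventually (\<lambda>x. A * (1 / cosh (b * x + a0))^2 = A * (1 / cosh (b * \<bar>x\<bar> + a0))^2) at_top"
      using eventually_ge_at_top[of 0] by (rule eventually_mono) (simp only: abs_of_nonneg)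
    show ?thesis using tendsto_cong[OF ev] lim by simp
  qed
  thus "((\<lambda>x. Qwg p \<omega> \<gamma> x powr (p - 1)) \<longlongrightarrow> 0) at_top" unfolding V .
qed
lemma even_deriv:
  fixes f :: "real \<Rightarrow> real"
  assumes ev: "\<And>x. f (-x) = f x" and d: "f differentiable (at (-x))"
  shows "deriv f x = - deriv f (-x)"
proof -
  have D: "(f has_real_derivative deriv f (-x)) (at (-x))"
    using d by (simp add: DERIV_deriv_iff_real_differentiable)
  have g: "(uminus has_real_derivative -1) (at x)" by (auto intro!: derivative_eq_intros)
  have "((\<lambda>t. f (-t)) has_real_derivative deriv f (-x) * -1) (at x)"
    using DERIV_chain2[of f "deriv f (-x)" uminus x "-1"] D g by simp
  moreover have "(\<lambda>t. f (-t)) = f" using ev by auto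
  ultimately show ?thesis by (simp add: DERIV_imp_deriv)
qed

lemma bdd_cont_Icc:
  fixes g :: "real \<Rightarrow> real"
  assumes "continuous_on {a..b} g"
  shows "\<exists>B. \<forall>x\<in>{a..b}. \<bar>g x\<bar> \<le> B"
proof -
  have "bounded (g ` {a..b})" by (intro compact_imp_bounded compact_continuous_image assms) auto
  thus ?thesis by (auto simp: bounded_iff)
qed

lemma bdd_right0:
  fixes g :: "real \<Rightarrow> real"
  assumes lim: "(g \<longlongrightarrow> a) (at_right 0)" and c: "\<And>x. x > 0 \<Longrightarrow> isCont g x"
  shows "\<exists>B. \<forall>x\<in>{0<..R}. \<bar>g x\<bar> \<le> B"
proof -
  have "eventually (\<lambda>x. dist (g x) a < 1) (at_right 0)"
    using lim by (rule tendstoD) simp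
  then obtain b where b: "b > 0" "\<And>y. y > 0 \<Longrightarrow> y < b \<Longrightarrow> dist (g y) a < 1"
    unfolding eventually_at_right_field by auto
  have "continuous_on {b/2..R} g"
    using b c by (intro continuous_at_imp_continuous_on) auto
  then obtain B where B: "\<forall>x\<in>{b/2..R}. \<bar>g x\<bar> \<le> B" using bdd_cont_Icc by blast
  show ?thesis
  proof (intro exI[of _ "max B (\<bar>a\<bar>+1)"] ballI)
    fix x assume x: "x \<in> {0<..R}"
    show "\<bar>g x\<bar> \<le> max B (\<bar>a\<bar>+1)"
    proof (cases "x < b")
      case True
      hence "dist (g x) a < 1" using b x by auto
      thus ?thesis by (auto simp: dist_real_def)
    next
      case False
      hence "x \<in> {b/2..R}" using x b by auto
      hence "\<bar>g x\<bar> \<le> B" using B by blast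
      thus ?thesis by simp
    qed
  qed
qed

lemma final_bound:
  fixes u v Q :: "real \<Rightarrow> real"
  assumes uv: "\<And>x. x \<noteq> 0 \<Longrightarrow> u x^2 + v x^2 \<le> C * exp(-2* s*\<bar>x\<bar>)"
    and Qp: "\<And>x. Q x > 0" and c: "c > 0" and Ql: "\<And>x. c * exp(-w*\<bar>x\<bar>) \<le> Q x"
    and ew: "\<eta> + w = s"
  shows "\<exists>C. \<forall>x. x \<noteq> 0 \<longrightarrow> norm (complex_of_real (exp (\<eta>*\<bar>x\<bar>) / Q x) * Complex (u x) (v x)) \<le> C"
    and "\<exists>C. \<forall>x. x \<noteq> 0 \<longrightarrow> norm (complex_of_real (exp (\<eta>*\<bar>x\<bar>) / Q x) * cnj (Complex (u x) (v x))) \<le> C"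
proof -
  have C0: "C \<ge> 0"
  proof -
    have "0 \<le> u 1^2 + v 1^2" by simp
    also have "\<dots> \<le> C * exp(-2* s*\<bar>1\<bar>)" using uv[of 1] by simp
    finally show ?thesis by (simp add: zero_le_mult_iff)
  qed
  have main: "exp (\<eta>*\<bar>x\<bar>) / Q x * sqrt (u x^2 + v x^2) \<le> sqrt C / c" if x: "x \<noteq> 0" for x
  proof -
    have "sqrt (u x^2 + v x^2) \<le> sqrt (C * exp(-2* s*\<bar>x\<bar>))" using uv[OF x] by simp
    also have "\<dots> = sqrt C * exp(-s*\<bar>x\<bar>)"
    proof -
      have e: "exp(-s*\<bar>x\<bar>) * exp(-s*\<bar>x\<bar>) = exp(-2* s*\<bar>x\<bar>)"
        unfolding mult_exp_exp by (rule arg_cong[where f=exp]) simp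
      have "(sqrt C * exp(-s*\<bar>x\<bar>))^2 = (sqrt C * sqrt C) * (exp(-s*\<bar>x\<bar>) * exp(-s*\<bar>x\<bar>))"
        by (simp add: power2_eq_square algebra_simps)
      also have "\<dots> = C * exp(-2* s*\<bar>x\<bar>)" using C0 e by simp
      finally have "C * exp(-2* s*\<bar>x\<bar>) = (sqrt C * exp(-s*\<bar>x\<bar>))^2" ..
      thus ?thesis using C0 by simp
    qed
    finally have s1: "sqrt (u x^2 + v x^2) \<le> sqrt C * exp(-s*\<bar>x\<bar>)" .
    have s2: "exp (\<eta>*\<bar>x\<bar>) / Q x \<le> exp (\<eta>*\<bar>x\<bar>) / (c * exp(-w*\<bar>x\<bar>))"
      using Ql[of x] c Qp[of x] by (intro divide_left_mono) auto
    have "exp (\<eta>*\<bar>x\<bar>) / Q x * sqrt (u x^2 + v x^2) \<le> exp (\<eta>*\<bar>x\<bar>) / (c * exp(-w*\<bar>x\<bar>)) * (sqrt C * exp(-s*\<bar>x\<bar>))"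
      using s1 s2 Qp[of x] c by (intro mult_mono) auto
    also have "\<dots> = sqrt C / c * (exp (\<eta>*\<bar>x\<bar>) * exp (w*\<bar>x\<bar>) * exp(-s*\<bar>x\<bar>))"
      using c by (simp add: exp_minus field_simps)
    also have "exp (\<eta>*\<bar>x\<bar>) * exp (w*\<bar>x\<bar>) * exp(-s*\<bar>x\<bar>) = 1"
      using ew by (simp flip: exp_add add: algebra_simps) (simp flip: distrib_right)
    finally show ?thesis by simp
  qed
  have nm: "norm (complex_of_real (exp (\<eta>*\<bar>x\<bar>) / Q x) * Complex (u x) (v x)) = exp (\<eta>*\<bar>x\<bar>) / Q x * sqrt (u x^2 + v x^2)"
    and nm2: "norm (complex_of_real (exp (\<eta>*\<bar>x\<bar>) / Q x) * cnj (Complex (u x) (v x))) = exp (\<eta>*\<bar>x\<bar>) / Q x * sqrt (u x^2 + v x^2)" for x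
    unfolding norm_mult norm_of_real complex_mod_cnj complex_norm using Qp[of x] by simp_all
  show "\<exists>C. \<forall>x. x \<noteq> 0 \<longrightarrow> norm (complex_of_real (exp (\<eta>*\<bar>x\<bar>) / Q x) * Complex (u x) (v x)) \<le> C"
    using main nm by metis
  show "\<exists>C. \<forall>x. x \<noteq> 0 \<longrightarrow> norm (complex_of_real (exp (\<eta>*\<bar>x\<bar>) / Q x) * cnj (Complex (u x) (v x))) \<le> C"
    using main nm2 by metis
qed

lemma sq_le_of_abs_le: assumes "\<bar>y\<bar> \<le> (B::real)" shows "y^2 \<le> B^2"
proof -
  have "\<bar>y\<bar>^2 \<le> B^2" using assms by (intro power_mono) auto
  thus ?thesis by simp
qed

theorem lemma2p21:
  fixes p \<omega> \<gamma> e :: real and Y1 Y2 :: "real \<Rightarrow> real"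
  assumes "\<gamma> < 0" and "p > 5" and "\<omega> > \<gamma>\<^sup>2 / 4"
    and "e > 0" and "even_eigpair p \<omega> \<gamma> e Y1 Y2"
    and "\<And>lam f1 f2. lam > 0 \<Longrightarrow> even_eigpair p \<omega> \<gamma> lam f1 f2 \<Longrightarrow>
           lam = e \<and> (\<exists>c::real. f1 = (\<lambda>x. c * Y1 x) \<and> f2 = (\<lambda>x. c * Y2 x))"
  shows "\<exists>\<eta>>0. \<forall>\<alpha>\<in>{0::nat, 1}. \<forall>Y\<in>{(\<lambda>x. Complex ((deriv ^^ \<alpha>) Y1 x) ((deriv ^^ \<alpha>) Y2 x)),
                                   (\<lambda>x. cnj (Complex ((deriv ^^ \<alpha>) Y1 x) ((deriv ^^ \<alpha>) Y2 x)))}.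
           \<exists>C. \<forall>x. x \<noteq> 0 \<longrightarrow> norm (complex_of_real (exp (\<eta> * \<bar>x\<bar>) / Qwg p \<omega> \<gamma> x) * Y x) \<le> C"
proof -
  note ep = assms(5)[unfolded even_eigpair_def]
  have D1: "D_even \<gamma> Y1" and D2: "D_even \<gamma> Y2" using ep by auto
  have eq1: "\<And>x. x \<noteq> 0 \<Longrightarrow> Lplus p \<omega> \<gamma> Y1 x = e * Y2 x"
    and eq2: "\<And>x. x \<noteq> 0 \<Longrightarrow> Lminus p \<omega> \<gamma> Y2 x = - e * Y1 x" using ep by auto
  note D1u = D1[unfolded D_even_def] and D2u = D2[unfolded D_even_def]
  have cont1: "continuous_on UNIV Y1" and cont2: "continuous_on UNIV Y2" using D1u D2u by auto
  have ev1: "\<And>x. Y1 (-x) = Y1 x" and ev2: "\<And>x. Y2 (-x) = Y2 x" using D1u D2u by auto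
  have dif1: "\<And>x. x \<noteq> 0 \<Longrightarrow> Y1 differentiable (at x) \<and> deriv Y1 differentiable (at x)"
    and dif2: "\<And>x. x \<noteq> 0 \<Longrightarrow> Y2 differentiable (at x) \<and> deriv Y2 differentiable (at x)"
    using D1u D2u by auto
  have i1: "integrable lborel (\<lambda>x. (Y1 x)\<^sup>2)" and i2: "integrable lborel (\<lambda>x. (Y2 x)\<^sup>2)"
    using D1u D2u by auto
  have i1': "set_integrable lborel (UNIV - {0}) (\<lambda>x. (deriv Y1 x)\<^sup>2)"
    and i2': "set_integrable lborel (UNIV - {0}) (\<lambda>x. (deriv Y2 x)\<^sup>2)" using D1u D2u by auto
  obtain a1 where a1: "(deriv Y1 \<longlongrightarrow> a1) (at_right 0)" using D1u by auto
  obtain a2 where a2: "(deriv Y2 \<longlongrightarrow> a2) (at_right 0)" using D2u by auto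
  have w0: "\<omega> > 0" using assms(3) by (smt (verit) zero_le_power2 divide_nonneg_pos)
  have p1: "p > 1" using assms(2) by simp
  define k where "k = csqrt (Complex \<omega> e)"
  define kr where "kr = Re k"
  define ki where "ki = Im k"
  have k2: "k^2 = Complex \<omega> e" unfolding k_def by simp
  have kk1: "kr^2 - ki^2 = \<omega>"
  proof -
    have "Re (k^2) = \<omega>" using k2 by simp
    thus ?thesis unfolding kr_def ki_def by (simp add: power2_eq_square)
  qed
  have kk2: "2*kr*ki = e"
  proof -
    have "Im (k^2) = e" using k2 by simp
    thus ?thesis unfolding kr_def ki_def by (simp add: power2_eq_square algebra_simps)
  qed
  have kr0: "kr \<ge> 0" unfolding kr_def k_def by (rule Re_csqrt)
  have ki0: "ki \<noteq> 0" using kk2 assms(4) by auto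
  have "\<omega> < kr^2" using kk1 ki0 by (smt (verit) zero_less_power2)
  hence krw: "sqrt \<omega> < kr" using kr0 by (metis real_sqrt_less_iff real_sqrt_abs abs_of_nonneg)
  have sw0: "sqrt \<omega> > 0" using w0 by simp
  have kr: "kr > 0" using krw sw0 by linarith
  define s where "s = (kr + sqrt \<omega>) / 2"
  define \<epsilon> where "\<epsilon> = (kr - sqrt \<omega>) / 4"
  define \<eta> where "\<eta> = (kr - sqrt \<omega>) / 2"
  have \<epsilon>0: "\<epsilon> > 0" unfolding \<epsilon>_def using krw by simp
  define V where "V x = Qwg p \<omega> \<gamma> x powr (p - 1)" for x
  note QF = Q_facts[OF p1 w0, of \<gamma>]
  have "eventually (\<lambda>x. V x < \<epsilon> * kr / p) at_top"
    using QF(4) \<epsilon>0 kr p1 unfolding V_def by (intro order_tendstoD) auto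
  then obtain R0 where R0: "\<And>x. x \<ge> R0 \<Longrightarrow> V x < \<epsilon> * kr / p"
    unfolding eventually_at_top_linorder by auto
  define R where "R = max R0 1"
  have R: "R > 0" unfolding R_def by simp
  have intR: "set_integrable lborel {R..} (\<lambda>x. Y1 x^2 + Y2 x^2 + deriv Y1 x^2 + deriv Y2 x^2)"
  proof -
    have s1: "set_integrable lborel {R..} (\<lambda>x. (Y1 x)\<^sup>2)" using i1
      unfolding set_integrable_def by (intro integrable_mult_indicator) auto
    have s2: "set_integrable lborel {R..} (\<lambda>x. (Y2 x)\<^sup>2)" using i2
      unfolding set_integrable_def by (intro integrable_mult_indicator) auto
    have s3: "set_integrable lborel {R..} (\<lambda>x. (deriv Y1 x)\<^sup>2)"
      by (rule set_integrable_subset[OF i1']) (use R in auto)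
    have s4: "set_integrable lborel {R..} (\<lambda>x. (deriv Y2 x)\<^sup>2)"
      by (rule set_integrable_subset[OF i2']) (use R in auto)
    show ?thesis by (intro set_integral_add s1 s2 s3 s4)
  qed
  have dec: "\<exists>C. \<forall>x\<ge>R. Y1 x^2 + Y2 x^2 \<le> C * exp(-2* s*x) \<and> deriv Y1 x^2 + deriv Y2 x^2 \<le> C*exp(-2* s*x)"
  proof (rule decay[where Y1''="deriv (deriv Y1)" and Y2''="deriv (deriv Y2)" and V=V and p=p
        and kr=kr and ki=ki and om=\<omega> and e=e and \<epsilon>=\<epsilon>])
    show "kr > 0" "kr^2 - ki^2 = \<omega>" "2*kr*ki = e" "p \<ge> 1" using kr kk1 kk2 p1 by auto
    show "0 \<le> \<epsilon>" "2*\<epsilon> \<le> kr - s" unfolding \<epsilon>_def s_def using krw by (auto simp: field_simps)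
    show "0 \<le> s" unfolding s_def using krw sw0 by argo
    show "set_integrable lborel {R..} (\<lambda>x. Y1 x^2 + Y2 x^2 + deriv Y1 x^2 + deriv Y2 x^2)" by (rule intR)
    fix x assume x: "x \<ge> R"
    hence x0: "x \<noteq> 0" using R by auto
    show "(Y1 has_real_derivative deriv Y1 x) (at x)" "(Y2 has_real_derivative deriv Y2 x) (at x)"
      "(deriv Y1 has_real_derivative deriv (deriv Y1) x) (at x)" "(deriv Y2 has_real_derivative deriv (deriv Y2) x) (at x)"
      using dif1[OF x0] dif2[OF x0] by (auto simp: DERIV_deriv_iff_real_differentiable)
    show "deriv (deriv Y1) x = \<omega>*Y1 x - p*V x*Y1 x - e*Y2 x"
      using eq1[OF x0] unfolding Lplus_def V_def by (simp add: algebra_simps)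
    show "deriv (deriv Y2) x = \<omega>*Y2 x - V x*Y2 x + e*Y1 x"
      using eq2[OF x0] unfolding Lminus_def V_def by (simp add: algebra_simps)
    have "V x < \<epsilon> * kr / p" using R0[of x] x unfolding R_def by auto
    hence "p * V x \<le> \<epsilon> * kr" using p1 by (simp add: field_simps)
    moreover have "0 \<le> V x" unfolding V_def by simp
    ultimately show "0 \<le> V x \<and> p * V x \<le> \<epsilon> * kr" by simp
  qed
  then obtain C where C: "\<And>x. x \<ge> R \<Longrightarrow> Y1 x^2 + Y2 x^2 \<le> C * exp(-2* s*x) \<and> deriv Y1 x^2 + deriv Y2 x^2 \<le> C*exp(-2* s*x)"
    by blast
  obtain B1 where B1: "\<forall>x\<in>{0..R}. \<bar>Y1 x\<bar> \<le> B1"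
    using bdd_cont_Icc[of 0 R Y1] cont1 by (auto intro: continuous_on_subset)
  obtain B2 where B2: "\<forall>x\<in>{0..R}. \<bar>Y2 x\<bar> \<le> B2"
    using bdd_cont_Icc[of 0 R Y2] cont2 by (auto intro: continuous_on_subset)
  have ic1: "isCont (deriv Y1) x" if "x > 0" for x using dif1[of x] that differentiable_imp_continuous_within by auto
  have ic2: "isCont (deriv Y2) x" if "x > 0" for x using dif2[of x] that differentiable_imp_continuous_within by auto
  obtain B3 where B3: "\<forall>x\<in>{0<..R}. \<bar>deriv Y1 x\<bar> \<le> B3" using bdd_right0[OF a1 ic1] by blast
  obtain B4 where B4: "\<forall>x\<in>{0<..R}. \<bar>deriv Y2 x\<bar> \<le> B4" using bdd_right0[OF a2 ic2] by blast
  define C' where "C' = max C ((B1^2 + B2^2 + B3^2 + B4^2) * exp (2* s*R))"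
  have s0: "s > 0" unfolding s_def using add_pos_pos[OF kr sw0] by simp
  have pos: "Y1 x^2 + Y2 x^2 \<le> C' * exp(-2* s*x) \<and> deriv Y1 x^2 + deriv Y2 x^2 \<le> C' * exp(-2* s*x)"
    if x: "x > 0" for x
  proof (cases "x \<ge> R")
    case True
    have "C * exp(-2* s*x) \<le> C' * exp(-2* s*x)" unfolding C'_def by (intro mult_right_mono) auto
    thus ?thesis using C[OF True] by linarith
  next
    case False
    let ?M = "B1^2 + B2^2 + B3^2 + B4^2"
    have xr: "x \<in> {0..R}" "x \<in> {0<..R}" using x False by auto
    have "?M \<le> ?M * (exp (2* s*R) * exp (-2* s*x))"
    proof -
      have "exp (2* s*R) * exp (-2* s*x) = exp (2* s*(R - x))" by (simp add: mult_exp_exp algebra_simps)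
      also have "\<dots> \<ge> 1" using False s0 by simp
      finally show ?thesis using mult_left_mono[of 1 _ ?M] by simp
    qed
    also have "\<dots> \<le> C' * exp(-2* s*x)" unfolding C'_def by (simp add: mult.assoc[symmetric])
    finally have M: "?M \<le> C' * exp(-2* s*x)" .
    have "Y1 x^2 \<le> B1^2" "Y2 x^2 \<le> B2^2" "deriv Y1 x^2 \<le> B3^2" "deriv Y2 x^2 \<le> B4^2"
      using B1 B2 B3 B4 xr by (auto intro!: sq_le_of_abs_le)
    moreover have "0 \<le> B1^2" "0 \<le> B2^2" "0 \<le> B3^2" "0 \<le> B4^2" by simp_all
    ultimately have "Y1 x^2 + Y2 x^2 \<le> ?M" "deriv Y1 x^2 + deriv Y2 x^2 \<le> ?M"
      by argo+
    with M show ?thesis by argo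
  qed
  have all0: "Y1 x^2 + Y2 x^2 \<le> C' * exp(-2* s*\<bar>x\<bar>)" if "x \<noteq> 0" for x
  proof (cases "x > 0")
    case True thus ?thesis using pos[OF True] by simp
  next
    case False
    hence "-x > 0" using that by simp
    thus ?thesis using pos[of "-x"] False ev1[of x] ev2[of x] by simp
  qed
  have all1: "deriv Y1 x^2 + deriv Y2 x^2 \<le> C' * exp(-2* s*\<bar>x\<bar>)" if "x \<noteq> 0" for x
  proof (cases "x > 0")
    case True thus ?thesis using pos[OF True] by simp
  next
    case False
    hence nx: "-x > 0" using that by simp
    have "deriv Y1 x = - deriv Y1 (-x)" using ev1 dif1[of "-x"] nx by (intro even_deriv) auto
    moreover have "deriv Y2 x = - deriv Y2 (-x)" using ev2 dif2[of "-x"] nx by (intro even_deriv) auto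
    ultimately show ?thesis using pos[OF nx] False by simp
  qed
  obtain c where c: "c > 0" "\<And>x. Qwg p \<omega> \<gamma> x \<ge> c * exp (- sqrt \<omega> * \<bar>x\<bar>)" using QF(3) by blast
  have ew: "\<eta> + sqrt \<omega> = s" unfolding \<eta>_def s_def by argo
  note FB0 = final_bound[where u=Y1 and v=Y2 and Q="Qwg p \<omega> \<gamma>", OF all0 QF(1) c(1) c(2) ew]
  note FB1 = final_bound[where u="deriv Y1" and v="deriv Y2" and Q="Qwg p \<omega> \<gamma>", OF all1 QF(1) c(1) c(2) ew]
  show ?thesis
  proof (rule exI[of _ \<eta>], intro conjI ballI)
    show "\<eta> > 0" unfolding \<eta>_def using krw by simp
    fix \<alpha> :: nat and Y assume \<alpha>: "\<alpha> \<in> {0, 1}"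
      and Y: "Y \<in> {(\<lambda>x. Complex ((deriv ^^ \<alpha>) Y1 x) ((deriv ^^ \<alpha>) Y2 x)),
                   (\<lambda>x. cnj (Complex ((deriv ^^ \<alpha>) Y1 x) ((deriv ^^ \<alpha>) Y2 x)))}"
    show "\<exists>C. \<forall>x. x \<noteq> 0 \<longrightarrow> norm (complex_of_real (exp (\<eta> * \<bar>x\<bar>) / Qwg p \<omega> \<gamma> x) * Y x) \<le> C"
    proof -
      consider "\<alpha> = 0" | "\<alpha> = 1" using \<alpha> by auto
      then show ?thesis
      proof cases
        case 1
        hence "Y = (\<lambda>x. Complex (Y1 x) (Y2 x)) \<or> Y = (\<lambda>x. cnj (Complex (Y1 x) (Y2 x)))" using Y by simp
        thus ?thesis using FB0 by (elim disjE) simp_all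
      next
        case 2
        hence "Y = (\<lambda>x. Complex (deriv Y1 x) (deriv Y2 x)) \<or> Y = (\<lambda>x. cnj (Complex (deriv Y1 x) (deriv Y2 x)))" using Y by simp
        thus ?thesis using FB1 by (elim disjE) simp_all
      qed
    qed
  qed
qed

end
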